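(* Let $K$ be a complex whose spectral radius $\mathfrak{q}_{r-1}(K)$ is maximum among all complexes in $\mathcal{K}(n,r,\beta)$. Then $K$ contains every $r$-element subset of $V(K)$ as an $(r-1)$-face, and $K$ is $(r-1)$-path connected.
   Context: A (finite abstract) simplicial complex $K$ on a finite vertex set $V(K)$ is a family of subsets of $V(K)$ closed under taking subsets and containing every singleton; it is on $n$ vertices if $|V(K)|=n$. An $i$-face is a member of cardinality $i+1$; $S_i(K)$ is the set of $i$-faces; facets are inclusion-maximal faces; $K$ is pure if all facets have the same dimension. For an $i$-face $F$, $d_K(F)$ is the number of $(i+1)$-faces containing $F$. Two distinct $i$-faces are up-neighbors if their union is an $(i+1)$-face. $K$ is $i$-path connected if for any two $i$-faces $F,G$ there is a sequence $F=F_1,\dots,F_m=G$ of $i$-faces in which consecutive terms are up-neighbors. The signless up Laplacian $Q_i^{\mathrm{up}}(K)$ is the operator on $\mathbb{R}^{S_i(K)}$ given by $(Q_i^{\mathrm{up}}(K)f)(F)=d_K(F)f(F)+\sum_{F'\text{ up-neighbor of }F}f(F')$, and $\mathfrak{q}_i(K)$ is its largest eigenvalue (spectral radius). $\beta_r(K)=\dim_{\mathbb R}H_r(K;\mathbb R)$. $\mathcal{K}(n,r,\beta)$ denotes the set of pure $r$-dimensional simplicial complexes on $n$ vertices with $\beta_r=\beta$ ($r\ge 1$). *)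

theory Defs
  imports "HOL-Analysis.Analysis" "HOL-Library.Function_Algebras"
begin

text \<open>Finite abstract simplicial complexes on vertices of type nat (the natural
order on nat fixes the orientation used in the boundary operator).\<close>

definition simplicial_complex :: "nat set set \<Rightarrow> bool" where
  "simplicial_complex K \<longleftrightarrow> finite K \<and> (\<forall>F\<in>K. finite F) \<and>
     (\<forall>F\<in>K. \<forall>G. G \<subseteq> F \<longrightarrow> G \<in> K)"

definition vertices :: "nat set set \<Rightarrow> nat set" where
  "vertices K = \<Union>K"

definition faces :: "nat set set \<Rightarrow> nat \<Rightarrow> nat set set" where
  "faces K i = {F \<in> K. card F = i + 1}"

definition facets :: "nat set set \<Rightarrow> nat set set" where
  "facets K = {F \<in> K. \<not> (\<exists>G\<in>K. F \<subset> G)}"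

definition pure_of_dim :: "nat set set \<Rightarrow> nat \<Rightarrow> bool" where
  "pure_of_dim K r \<longleftrightarrow> facets K \<noteq> {} \<and> (\<forall>F\<in>facets K. card F = r + 1)"

definition chains :: "nat set set \<Rightarrow> nat \<Rightarrow> (nat set \<Rightarrow> real) set" where
  "chains K i = {c. \<forall>F. F \<notin> faces K i \<longrightarrow> c F = 0}"

text \<open>simplicial boundary map from i-chains to (i-1)-chains (zero for i = 0);
the coefficient of G in the boundary of G plus v is (-1)^(position of v)\<close>
definition boundary :: "nat set set \<Rightarrow> nat \<Rightarrow> (nat set \<Rightarrow> real) \<Rightarrow> (nat set \<Rightarrow> real)" where
  "boundary K i c = (\<lambda>G. if 1 \<le> i \<and> G \<in> faces K (i - 1) then
      (\<Sum>v\<in>{v \<in> vertices K - G. insert v G \<in> K}.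
          (-1) ^ card {u \<in> G. u < v} * c (insert v G))
    else 0)"

abbreviation fscale :: "real \<Rightarrow> (nat set \<Rightarrow> real) \<Rightarrow> (nat set \<Rightarrow> real)" where
  "fscale a f \<equiv> (\<lambda>x. a * f x)"

abbreviation rdim :: "(nat set \<Rightarrow> real) set \<Rightarrow> nat" where
  "rdim S \<equiv> vector_space.dim fscale S"

definition betti :: "nat set set \<Rightarrow> nat \<Rightarrow> nat" where
  "betti K i = rdim {c \<in> chains K i. boundary K i c = 0}
             - rdim (boundary K (i + 1) ` chains K (i + 1))"

definition up_degree :: "nat set set \<Rightarrow> nat set \<Rightarrow> nat" where
  "up_degree K F = card {G \<in> K. F \<subseteq> G \<and> card G = card F + 1}"

definition up_neighbors :: "nat set set \<Rightarrow> nat \<Rightarrow> nat set \<Rightarrow> nat set \<Rightarrow> bool" where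
  "up_neighbors K i F G \<longleftrightarrow> F \<in> faces K i \<and> G \<in> faces K i \<and> F \<noteq> G \<and>
      F \<union> G \<in> faces K (i + 1)"

definition signless_up_laplacian :: "nat set set \<Rightarrow> nat \<Rightarrow> (nat set \<Rightarrow> real) \<Rightarrow> (nat set \<Rightarrow> real)" where
  "signless_up_laplacian K i f = (\<lambda>F. if F \<in> faces K i then
      real (up_degree K F) * f F + (\<Sum>G\<in>{G \<in> faces K i. up_neighbors K i F G}. f G)
    else 0)"

definition eigenvalues_Qup :: "nat set set \<Rightarrow> nat \<Rightarrow> real set" where
  "eigenvalues_Qup K i = {mu. \<exists>f \<in> chains K i. f \<noteq> 0 \<and>
      signless_up_laplacian K i f = fscale mu f}"

definition q_spec :: "nat set set \<Rightarrow> nat \<Rightarrow> real" where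
  "q_spec K i = Max (eigenvalues_Qup K i)"

definition path_connected_faces :: "nat set set \<Rightarrow> nat \<Rightarrow> bool" where
  "path_connected_faces K i \<longleftrightarrow> (\<forall>F\<in>faces K i. \<forall>G\<in>faces K i.
      \<exists>xs. xs \<noteq> [] \<and> hd xs = F \<and> last xs = G \<and> set xs \<subseteq> faces K i \<and>
        (\<forall>j. Suc j < length xs \<longrightarrow> up_neighbors K i (xs ! j) (xs ! Suc j)))"

definition cK :: "nat \<Rightarrow> nat \<Rightarrow> nat \<Rightarrow> nat set set set" where
  "cK n r \<beta> = {K. simplicial_complex K \<and> card (vertices K) = n \<and>
      pure_of_dim K r \<and> betti K r = \<beta>}"

end

theory Submission
  imports Defs
begin
definition ip :: "'a set \<Rightarrow> ('a \<Rightarrow> real) \<Rightarrow> ('a \<Rightarrow> real) \<Rightarrow> real" where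
  "ip S g h = (\<Sum>F\<in>S. g F * h F)"
definition sv :: "'a set \<Rightarrow> ('b \<Rightarrow> 'a \<Rightarrow> real) \<Rightarrow> 'b \<Rightarrow> ('a \<Rightarrow> real) \<Rightarrow> real" where
  "sv S a t g = (\<Sum>G\<in>S. a t G * g G)"
definition PQ :: "'a set \<Rightarrow> 'b set \<Rightarrow> ('b \<Rightarrow> 'a \<Rightarrow> real) \<Rightarrow> ('a \<Rightarrow> real) \<Rightarrow> real" where
  "PQ S T a g = (\<Sum>t\<in>T. (sv S a t g)^2)"
definition BQ :: "'a set \<Rightarrow> 'b set \<Rightarrow> ('b \<Rightarrow> 'a \<Rightarrow> real) \<Rightarrow> ('a \<Rightarrow> real) \<Rightarrow> ('a \<Rightarrow> real) \<Rightarrow> real" where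
  "BQ S T a g h = (\<Sum>t\<in>T. sv S a t g * sv S a t h)"
definition QQ :: "'a set \<Rightarrow> 'b set \<Rightarrow> ('b \<Rightarrow> 'a \<Rightarrow> real) \<Rightarrow> ('a \<Rightarrow> real) \<Rightarrow> ('a \<Rightarrow> real)" where
  "QQ S T a g = (\<lambda>F. if F \<in> S then (\<Sum>t\<in>T. a t F * sv S a t g) else 0)"
definition chn :: "'a set \<Rightarrow> ('a \<Rightarrow> real) set" where
  "chn S = {g. \<forall>F. F \<notin> S \<longrightarrow> g F = 0}"
definition EV :: "'a set \<Rightarrow> 'b set \<Rightarrow> ('b \<Rightarrow> 'a \<Rightarrow> real) \<Rightarrow> real set" where
  "EV S T a = {mu. \<exists>g\<in>chn S. g \<noteq> 0 \<and> QQ S T a g = (\<lambda>x. mu * g x)}"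

lemma ip_QQ: "finite S \<Longrightarrow> ip S (QQ S T a g) h = BQ S T a g h"
proof -
  assume S: "finite S"
  have "ip S (QQ S T a g) h = (\<Sum>F\<in>S. \<Sum>t\<in>T. a t F * sv S a t g * h F)"
    unfolding ip_def QQ_def by (simp add: sum_distrib_right)
  also have "\<dots> = (\<Sum>t\<in>T. \<Sum>F\<in>S. sv S a t g * (a t F * h F))"
    by (subst sum.swap) (simp add: mult_ac)
  also have "\<dots> = BQ S T a g h"
    unfolding BQ_def sv_def[of S a _ h] by (simp add: sum_distrib_left)
  finally show ?thesis .
qed

lemma PQ_BQ: "PQ S T a g = BQ S T a g g"
  unfolding PQ_def BQ_def by (simp add: power2_eq_square)

lemma sv_lin: "finite S \<Longrightarrow> sv S a t (\<lambda>x. g x + c * h x) = sv S a t g + c * sv S a t h"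
  unfolding sv_def by (simp add: algebra_simps sum.distrib sum_distrib_left)

lemma sv_scale: "sv S a t (\<lambda>x. c * g x) = c * sv S a t g"
  unfolding sv_def by (simp add: algebra_simps sum_distrib_left)

lemma PQ_scale: "PQ S T a (\<lambda>x. c * g x) = c^2 * PQ S T a g"
  unfolding PQ_def by (simp add: sv_scale power_mult_distrib sum_distrib_left)

lemma ip_scale: "ip S (\<lambda>x. c * g x) (\<lambda>x. c * g x) = c^2 * ip S g g"
  unfolding ip_def by (simp add: sum_distrib_left power2_eq_square mult_ac)

lemma ip_nonneg: "ip S g g \<ge> 0"
  unfolding ip_def by (simp add: sum_nonneg)

lemma ip_zero_chn: assumes "finite S" "g \<in> chn S" "ip S g g = 0" shows "g = 0"
proof
  fix x
  show "g x = 0 x"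
  proof (cases "x \<in> S")
    case True
    have "\<forall>F\<in>S. g F * g F = 0"
      using assms(3) unfolding ip_def
      by (subst sum_nonneg_eq_0_iff[symmetric]) (auto simp: assms(1))
    with True show ?thesis by simp
  next
    case False then show ?thesis using assms(2) by (simp add: chn_def)
  qed
qed

lemma ip_pos_chn: assumes "finite S" "g \<in> chn S" "g \<noteq> 0" shows "ip S g g > 0"
  using ip_zero_chn[OF assms(1,2)] ip_nonneg[of S g] assms(3) by fastforce

lemma sv_cong: "(\<And>x. x \<in> S \<Longrightarrow> g x = h x) \<Longrightarrow> sv S a t g = sv S a t h"
  unfolding sv_def by simp
lemma PQ_cong: assumes "\<And>x. x \<in> S \<Longrightarrow> g x = h x" shows "PQ S T a g = PQ S T a h"
proof -
  have "\<And>t. sv S a t g = sv S a t h" using assms by (rule sv_cong)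
  then show ?thesis unfolding PQ_def by simp
qed
lemma ip_cong: "(\<And>x. x \<in> S \<Longrightarrow> g x = h x) \<Longrightarrow> ip S g g = ip S h h"
  unfolding ip_def by simp

lemma exists_max:
  assumes S: "finite S" "S \<noteq> {}" and T: "finite T"
  shows "\<exists>f\<in>chn S. ip S f f = 1 \<and> (\<forall>g\<in>chn S. ip S g g = 1 \<longrightarrow> PQ S T a g \<le> PQ S T a f)"
proof -
  define X where "X = product_topology (\<lambda>_. euclideanreal) S"
  define Kc where "Kc = PiE S (\<lambda>_. {-1..1::real})"
  have hK: "compactin X Kc"
    unfolding X_def Kc_def by (subst compactin_PiE) simp
  have hn: "continuous_map X euclideanreal (\<lambda>g. \<Sum>F\<in>S. g F * g F)"
    unfolding X_def
    by (intro continuous_map_sum continuous_map_real_mult S(1))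
       (auto intro: continuous_map_product_projection[of _ S "\<lambda>_. euclideanreal", simplified])
  define C where "C = {x \<in> topspace X. (\<Sum>F\<in>S. x F * x F) \<in> {1}}"
  have hC: "closedin X C" unfolding C_def
    by (rule closedin_continuous_map_preimage[OF hn]) simp
  define Y where "Y = C \<inter> Kc"
  have hY: "compactin X Y" unfolding Y_def using closed_Int_compactin[OF hC hK] .
  have hP: "continuous_map X euclideanreal (\<lambda>g. PQ S T a g)"
    unfolding PQ_def sv_def X_def
    by (intro continuous_map_sum continuous_map_real_pow continuous_map_real_mult S(1) T
          continuous_map_canonical_const)
       (auto intro: continuous_map_product_projection[of _ S "\<lambda>_. euclideanreal", simplified])
  have cpt: "compact ((\<lambda>g. PQ S T a g) ` Y)"
    using image_compactin[OF hY hP] by simp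
  obtain F0 where F0: "F0 \<in> S" using S(2) by blast
  define e0 :: "'a \<Rightarrow> real" where "e0 = (\<lambda>F. if F \<in> S then (if F = F0 then 1 else 0) else undefined)"
  have "(\<Sum>F\<in>S. e0 F * e0 F) = (\<Sum>F\<in>S. if F = F0 then 1 else 0)"
    by (rule sum.cong) (auto simp: e0_def)
  also have "\<dots> = 1" using F0 S(1) by simp
  finally have e0n: "(\<Sum>F\<in>S. e0 F * e0 F) = 1" .
  have "e0 \<in> Kc" unfolding Kc_def e0_def by (auto simp: PiE_iff extensional_def)
  moreover have "e0 \<in> topspace X" using \<open>e0 \<in> Kc\<close> unfolding X_def Kc_def by auto
  ultimately have "e0 \<in> Y" unfolding Y_def C_def using e0n by auto
  then have ne: "(\<lambda>g. PQ S T a g) ` Y \<noteq> {}" by blast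
  obtain m where m: "m \<in> (\<lambda>g. PQ S T a g) ` Y" "\<forall>y\<in>(\<lambda>g. PQ S T a g) ` Y. y \<le> m"
    using compact_attains_sup[OF cpt ne] by blast
  then obtain g0 where g0: "g0 \<in> Y" "m = PQ S T a g0" by blast
  define f where "f = (\<lambda>F. if F \<in> S then g0 F else 0)"
  have fc: "f \<in> chn S" unfolding f_def chn_def by simp
  have "ip S f f = ip S g0 g0" by (rule ip_cong) (simp add: f_def)
  also have "\<dots> = 1" using g0(1) unfolding Y_def C_def ip_def by simp
  finally have f1: "ip S f f = 1" .
  have fP: "PQ S T a f = PQ S T a g0" by (rule PQ_cong) (simp add: f_def)
  have "PQ S T a g \<le> PQ S T a f" if g: "g \<in> chn S" "ip S g g = 1" for g
  proof -
    define h where "h = restrict g S"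
    have bnd: "g F \<in> {-1..1}" if "F \<in> S" for F
    proof -
      have "g F * g F \<le> (\<Sum>F\<in>S. g F * g F)"
        using that S(1) by (intro member_le_sum) auto
      then have "g F ^ 2 \<le> 1" using g(2) unfolding ip_def by (simp add: power2_eq_square)
      then show ?thesis by (simp add: abs_square_le_1 abs_le_iff)
    qed
    have "h \<in> Kc" unfolding h_def Kc_def using bnd by auto
    moreover have "h \<in> topspace X" using \<open>h \<in> Kc\<close> unfolding X_def Kc_def by auto
    moreover have "(\<Sum>F\<in>S. h F * h F) = 1" using g(2) unfolding h_def ip_def by simp
    ultimately have "h \<in> Y" unfolding Y_def C_def by auto
    then have "PQ S T a h \<le> m" using m(2) by blast
    moreover have "PQ S T a h = PQ S T a g" by (rule PQ_cong) (simp add: h_def)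
    ultimately show ?thesis using g0(2) fP by simp
  qed
  then show ?thesis using fc f1 by blast
qed

lemma ip_expand: "ip S (\<lambda>x. g x + t * h x) (\<lambda>x. g x + t * h x) = ip S g g + 2 * t * ip S g h + t^2 * ip S h h"
  unfolding ip_def by (simp add: algebra_simps power2_eq_square sum.distrib sum_distrib_left)

lemma PQ_expand: assumes "finite S"
  shows "PQ S T a (\<lambda>x. g x + t * h x) = PQ S T a g + 2 * t * BQ S T a g h + t^2 * PQ S T a h"
  unfolding PQ_def BQ_def using assms
  by (simp add: sv_lin algebra_simps power2_eq_square sum.distrib sum_distrib_left)

lemma ip_sym: "ip S g h = ip S h g" unfolding ip_def by (simp add: mult_ac)
lemma BQ_sym: "BQ S T a g h = BQ S T a h g" unfolding BQ_def by (simp add: mult_ac)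

lemma quad_zero:
  fixes c d :: real
  assumes "\<forall>t. 2 * t * c + t^2 * d \<le> 0" shows "c = 0"
proof (rule ccontr)
  assume c: "c \<noteq> 0"
  define e where "e = 1 / (\<bar>d\<bar> + 1)"
  have e: "e > 0" "e * \<bar>d\<bar> < 1" unfolding e_def by (auto simp: field_simps)
  have "2 * (e * c) * c + (e * c)^2 * d \<le> 0" using assms by blast
  then have "e * c^2 * (2 + e * d) \<le> 0" by (simp add: algebra_simps power2_eq_square)
  moreover have "2 + e * d > 0" using e abs_le_iff[of d] 
    by (smt (verit, best) mult_left_mono abs_ge_minus_self mult_minus_right)
  moreover have "e * c^2 > 0" using e c by simp
  ultimately show False using mult_pos_pos[of "e*c^2" "2+e*d"] by linarith
qed

lemma QQ_chn: "QQ S T a g \<in> chn S" unfolding QQ_def chn_def by simp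

lemma chn_lin: "g \<in> chn S \<Longrightarrow> h \<in> chn S \<Longrightarrow> (\<lambda>x. g x + t * h x) \<in> chn S"
  unfolding chn_def by simp
lemma chn_diff: "g \<in> chn S \<Longrightarrow> h \<in> chn S \<Longrightarrow> (\<lambda>x. g x - t * h x) \<in> chn S"
  unfolding chn_def by simp
lemma chn_scale: "g \<in> chn S \<Longrightarrow> (\<lambda>x. t * g x) \<in> chn S"
  unfolding chn_def by simp

lemma PQ_zero: "PQ S T a (\<lambda>x. 0) = 0" unfolding PQ_def sv_def by simp

lemma rayleigh_bound:
  assumes S: "finite S" and M: "\<forall>g\<in>chn S. ip S g g = 1 \<longrightarrow> PQ S T a g \<le> M"
    and g: "g \<in> chn S"
  shows "PQ S T a g \<le> M * ip S g g"
proof (cases "ip S g g = 0")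
  case True
  then have "g = (\<lambda>x. 0)" using ip_zero_chn[OF S g] by (simp add: zero_fun_def)
  then have "PQ S T a g = 0" unfolding PQ_def sv_def by simp
  then show ?thesis using True by simp
next
  case False
  then have pos: "ip S g g > 0" using ip_nonneg[of S g] by simp
  define c where "c = 1 / sqrt (ip S g g)"
  have c2: "c^2 * ip S g g = 1" unfolding c_def using pos by (simp add: power_divide)
  have "ip S (\<lambda>x. c * g x) (\<lambda>x. c * g x) = 1" using c2 by (simp add: ip_scale)
  then have "PQ S T a (\<lambda>x. c * g x) \<le> M" using M chn_scale[OF g] by blast
  then have "c^2 * PQ S T a g \<le> M * (c^2 * ip S g g)" using c2 by (simp add: PQ_scale)
  then have "c^2 * PQ S T a g \<le> c^2 * (M * ip S g g)" by (simp add: mult_ac)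
  moreover have "c \<noteq> 0" using c2 by auto
  then have "c^2 > 0" by simp
  ultimately show ?thesis by simp
qed

lemma variational:
  assumes S: "finite S" and M: "\<forall>g\<in>chn S. PQ S T a g \<le> M * ip S g g"
    and g: "g \<in> chn S" and eq: "PQ S T a g = M * ip S g g"
  shows "QQ S T a g = (\<lambda>x. M * g x)"
proof -
  have c0: "BQ S T a g h - M * ip S g h = 0" if h: "h \<in> chn S" for h
  proof (rule quad_zero, rule allI)
    fix t
    have "PQ S T a (\<lambda>x. g x + t * h x) \<le> M * ip S (\<lambda>x. g x + t * h x) (\<lambda>x. g x + t * h x)"
      using M chn_lin[OF g h] by blast
    then show "2 * t * (BQ S T a g h - M * ip S g h) + t\<^sup>2 * (PQ S T a h - M * ip S h h) \<le> 0"
      using eq by (simp add: PQ_expand[OF S] ip_expand algebra_simps)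
  qed
  define h where "h = (\<lambda>x. QQ S T a g x - M * g x)"
  have hc: "h \<in> chn S" unfolding h_def by (rule chn_diff[OF QQ_chn g])
  have "BQ S T a g h = ip S (QQ S T a g) h" by (rule ip_QQ[OF S, symmetric])
  then have "ip S (QQ S T a g) h - M * ip S g h = 0" using c0[OF hc] by simp
  moreover have "ip S h h = ip S (QQ S T a g) h - M * ip S g h"
  proof -
    have "ip S h h = (\<Sum>F\<in>S. QQ S T a g F * h F - M * (g F * h F))"
      unfolding ip_def by (rule sum.cong) (auto simp: h_def algebra_simps)
    also have "\<dots> = ip S (QQ S T a g) h - M * ip S g h"
      unfolding ip_def by (simp add: sum_subtractf sum_distrib_left)
    finally show ?thesis .
  qed
  ultimately have "h = 0" using ip_zero_chn[OF S hc] by simp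
  then show ?thesis unfolding h_def by (auto simp: fun_eq_iff)
qed

lemma QQ_scale: "QQ S T a (\<lambda>x. c * g x) = (\<lambda>x. c * QQ S T a g x)"
  unfolding QQ_def by (auto simp: sv_scale sum_distrib_left mult_ac)

lemma ip_scale_left: "ip S (\<lambda>x. c * g x) h = c * ip S g h"
  unfolding ip_def by (simp add: sum_distrib_left mult_ac)

lemma EV_normalized:
  assumes S: "finite S" and mu: "mu \<in> EV S T a"
  shows "\<exists>e\<in>chn S. ip S e e = 1 \<and> QQ S T a e = (\<lambda>x. mu * e x)"
proof -
  obtain g where g: "g \<in> chn S" "g \<noteq> 0" "QQ S T a g = (\<lambda>x. mu * g x)"
    using mu unfolding EV_def by blast
  have pos: "ip S g g > 0" using ip_pos_chn[OF S g(1,2)] .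
  define c where "c = 1 / sqrt (ip S g g)"
  have c2: "c^2 * ip S g g = 1" unfolding c_def using pos by (simp add: power_divide)
  show ?thesis
  proof (intro bexI conjI)
    show "ip S (\<lambda>x. c * g x) (\<lambda>x. c * g x) = 1" using c2 by (simp add: ip_scale)
    show "QQ S T a (\<lambda>x. c * g x) = (\<lambda>x. mu * (c * g x))"
      by (simp add: QQ_scale g(3) mult_ac)
    show "(\<lambda>x. c * g x) \<in> chn S" by (rule chn_scale[OF g(1)])
  qed
qed

lemma ip_diff_expand: "ip S (\<lambda>x. u x - v x) (\<lambda>x. u x - v x) = ip S u u - 2 * ip S u v + ip S v v"
  unfolding ip_def by (simp add: algebra_simps power2_eq_square sum.distrib sum_subtractf sum_distrib_left)

lemma EV_finite:
  assumes S: "finite S"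
  shows "finite (EV S T a)"
proof (rule ccontr)
  assume inf: "\<not> finite (EV S T a)"
  obtain A where A: "finite A" "card A = Suc (card S)" "A \<subseteq> EV S T a"
    using infinite_arbitrarily_large[OF inf] by blast
  have "\<forall>mu\<in>A. \<exists>e\<in>chn S. ip S e e = 1 \<and> QQ S T a e = (\<lambda>x. mu * e x)"
    using EV_normalized[OF S] A(3) by blast
  then obtain e where e: "\<And>mu. mu \<in> A \<Longrightarrow> e mu \<in> chn S \<and> ip S (e mu) (e mu) = 1 \<and>
      QQ S T a (e mu) = (\<lambda>x. mu * e mu x)"
    by metis
  have orth: "ip S (e mu) (e nu) = 0" if "mu \<in> A" "nu \<in> A" "mu \<noteq> nu" for mu nu
  proof -
    have "mu * ip S (e mu) (e nu) = ip S (QQ S T a (e mu)) (e nu)"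
      using e[OF that(1)] by (simp add: ip_scale_left)
    also have "\<dots> = BQ S T a (e mu) (e nu)" by (rule ip_QQ[OF S])
    also have "\<dots> = BQ S T a (e nu) (e mu)" by (rule BQ_sym)
    also have "\<dots> = ip S (QQ S T a (e nu)) (e mu)" by (rule ip_QQ[OF S, symmetric])
    also have "\<dots> = nu * ip S (e mu) (e nu)"
      using e[OF that(2)] by (simp add: ip_scale_left ip_sym)
    finally show ?thesis using that(3) by simp
  qed
  have bessel: "(\<Sum>mu\<in>A. (e mu F)^2) \<le> 1" if F: "F \<in> S" for F
  proof -
    define d :: "'a \<Rightarrow> real" where "d = (\<lambda>x. if x = F then 1 else 0)"
    define v where "v = (\<lambda>x. \<Sum>mu\<in>A. e mu F * e mu x)"
    have "ip S d d = (\<Sum>x\<in>S. if x = F then 1 else 0)"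
      unfolding ip_def by (rule sum.cong) (auto simp: d_def)
    then have dd: "ip S d d = 1" using F S by simp
    have dv: "ip S d v = (\<Sum>mu\<in>A. (e mu F)^2)"
    proof -
      have "ip S d v = (\<Sum>x\<in>S. if x = F then v x else 0)"
        unfolding ip_def by (rule sum.cong) (auto simp: d_def)
      also have "\<dots> = v F" using F S by simp
      finally show ?thesis unfolding v_def by (simp add: power2_eq_square)
    qed
    have vv: "ip S v v = (\<Sum>mu\<in>A. (e mu F)^2)"
    proof -
      have "ip S v v = (\<Sum>x\<in>S. \<Sum>mu\<in>A. \<Sum>nu\<in>A. e mu F * e nu F * (e mu x * e nu x))"
        unfolding ip_def v_def by (simp add: sum_product mult_ac)
      also have "\<dots> = (\<Sum>mu\<in>A. \<Sum>nu\<in>A. \<Sum>x\<in>S. e mu F * e nu F * (e mu x * e nu x))"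
        by (subst sum.swap) (simp add: sum.swap[of _ S])
      also have "\<dots> = (\<Sum>mu\<in>A. \<Sum>nu\<in>A. e mu F * e nu F * ip S (e mu) (e nu))"
        unfolding ip_def by (simp add: sum_distrib_left)
      also have "\<dots> = (\<Sum>mu\<in>A. \<Sum>nu\<in>A. if nu = mu then (e mu F)^2 else 0)"
        using orth e by (intro sum.cong refl) (auto simp: power2_eq_square)
      also have "\<dots> = (\<Sum>mu\<in>A. (e mu F)^2)" using A(1) by simp
      finally show ?thesis .
    qed
    have "0 \<le> ip S (\<lambda>x. d x - v x) (\<lambda>x. d x - v x)" by (rule ip_nonneg)
    also have "\<dots> = 1 - (\<Sum>mu\<in>A. (e mu F)^2)" unfolding ip_diff_expand dd dv vv by simp
    finally show ?thesis by simp
  qed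
  have "real (card A) = (\<Sum>mu\<in>A. ip S (e mu) (e mu))" using e by simp
  also have "\<dots> = (\<Sum>F\<in>S. \<Sum>mu\<in>A. (e mu F)^2)"
    unfolding ip_def by (subst sum.swap) (simp add: power2_eq_square)
  also have "\<dots> \<le> (\<Sum>F\<in>S. 1)" by (rule sum_mono) (rule bessel)
  also have "\<dots> = real (card S)" by simp
  finally show False using A(2) by simp
qed

lemma spectral:
  assumes S: "finite S" "S \<noteq> {}" and T: "finite T"
  shows "finite (EV S T a) \<and> Max (EV S T a) \<in> EV S T a \<and>
    (\<forall>g\<in>chn S. PQ S T a g \<le> Max (EV S T a) * ip S g g) \<and>
    (\<forall>g\<in>chn S. PQ S T a g = Max (EV S T a) * ip S g g \<longrightarrow> QQ S T a g = (\<lambda>x. Max (EV S T a) * g x))"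
proof -
  obtain f where f: "f \<in> chn S" "ip S f f = 1" "\<forall>g\<in>chn S. ip S g g = 1 \<longrightarrow> PQ S T a g \<le> PQ S T a f"
    using exists_max[OF S T] by blast
  define M where "M = PQ S T a f"
  have bnd: "\<forall>g\<in>chn S. PQ S T a g \<le> M * ip S g g"
    using rayleigh_bound[OF S(1), of T a M] f(3) unfolding M_def by blast
  have var: "\<forall>g\<in>chn S. PQ S T a g = M * ip S g g \<longrightarrow> QQ S T a g = (\<lambda>x. M * g x)"
    using variational[OF S(1) bnd] by blast
  have fne: "f \<noteq> 0" using f(2) unfolding ip_def by auto
  have MEV: "M \<in> EV S T a" unfolding EV_def using f(1) fne var f(2) M_def by auto
  have le: "mu \<le> M" if mu: "mu \<in> EV S T a" for mu
  proof -
    obtain g where g: "g \<in> chn S" "g \<noteq> 0" "QQ S T a g = (\<lambda>x. mu * g x)"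
      using mu unfolding EV_def by blast
    have "mu * ip S g g = ip S (QQ S T a g) g" using g(3) by (simp add: ip_scale_left)
    also have "\<dots> = PQ S T a g" using ip_QQ[OF S(1)] PQ_BQ by metis
    also have "\<dots> \<le> M * ip S g g" using bnd g(1) by blast
    finally show ?thesis using ip_pos_chn[OF S(1) g(1,2)] by simp
  qed
  have fin: "finite (EV S T a)" by (rule EV_finite[OF S(1)])
  have "Max (EV S T a) = M" using fin MEV le by (intro Max_eqI) auto
  then show ?thesis using fin MEV bnd var by simp
qed

definition inc :: "nat set \<Rightarrow> nat set \<Rightarrow> real" where
  "inc t G = (if G \<subseteq> t then 1 else 0)"

lemma sc_finite: "simplicial_complex K \<Longrightarrow> finite K"
  unfolding simplicial_complex_def by blast
lemma sc_face_finite: "simplicial_complex K \<Longrightarrow> G \<in> K \<Longrightarrow> finite G"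
  unfolding simplicial_complex_def by blast
lemma sc_sub: "simplicial_complex K \<Longrightarrow> G \<in> K \<Longrightarrow> H \<subseteq> G \<Longrightarrow> H \<in> K"
  unfolding simplicial_complex_def by blast
lemma faces_finite: "simplicial_complex K \<Longrightarrow> finite (faces K i)"
  unfolding faces_def using sc_finite by auto

lemma chains_chn: "chains K i = chn (faces K i)"
  unfolding chains_def chn_def by simp

lemma up_nb_sym: "up_neighbors K i F G \<Longrightarrow> up_neighbors K i G F"
  unfolding up_neighbors_def by (auto simp: Un_commute)

lemma pair_cofaces:
  assumes K: "simplicial_complex K" and F: "F \<in> faces K i" and G: "G \<in> faces K i" and ne: "F \<noteq> G"
  shows "{t \<in> faces K (Suc i). F \<subseteq> t \<and> G \<subseteq> t} = (if F \<union> G \<in> faces K (Suc i) then {F \<union> G} else {})"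
proof -
  have fF: "finite F" "card F = Suc i" using F sc_face_finite[OF K] unfolding faces_def by auto
  have fG: "finite G" "card G = Suc i" using G sc_face_finite[OF K] unfolding faces_def by auto
  have nGF: "\<not> G \<subseteq> F"
  proof
    assume "G \<subseteq> F"
    then have "G = F" using card_subset_eq[OF fF(1), of G] fF fG by simp
    then show False using ne by simp
  qed
  have ps: "F \<subset> F \<union> G" using nGF by blast
  have fU: "finite (F \<union> G)" using fF fG by simp
  have cu: "card (F \<union> G) > Suc i" using psubset_card_mono[OF fU ps] fF by simp
  have eq: "t = F \<union> G" if t: "t \<in> faces K (Suc i)" "F \<subseteq> t" "G \<subseteq> t" for t
  proof -
    have ft: "finite t" using t(1) sc_face_finite[OF K] unfolding faces_def by blast
    have ct: "card t = Suc (Suc i)" using t(1) unfolding faces_def by simp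
    have sub: "F \<union> G \<subseteq> t" using t(2,3) by blast
    have "card (F \<union> G) \<le> card t" by (rule card_mono[OF ft sub])
    then have "card (F \<union> G) = card t" using cu ct by simp
    then show ?thesis using card_subset_eq[OF ft sub] by simp
  qed
  show ?thesis
  proof (cases "F \<union> G \<in> faces K (Suc i)")
    case True
    have "{t \<in> faces K (Suc i). F \<subseteq> t \<and> G \<subseteq> t} = {F \<union> G}"
    proof
      show "{t \<in> faces K (Suc i). F \<subseteq> t \<and> G \<subseteq> t} \<subseteq> {F \<union> G}" using eq by blast
      show "{F \<union> G} \<subseteq> {t \<in> faces K (Suc i). F \<subseteq> t \<and> G \<subseteq> t}" using True by blast
    qed
    then show ?thesis using True by simp
  next
    case False
    have "{t \<in> faces K (Suc i). F \<subseteq> t \<and> G \<subseteq> t} = {}" using eq False by blast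
    then show ?thesis using False by simp
  qed
qed

lemma up_degree_eq:
  assumes "F \<in> faces K i"
  shows "up_degree K F = card {t \<in> faces K (Suc i). F \<subseteq> t}"
proof -
  have "card F = Suc i" using assms unfolding faces_def by simp
  then have "{G \<in> K. F \<subseteq> G \<and> card G = card F + 1} = {t \<in> faces K (Suc i). F \<subseteq> t}"
    unfolding faces_def by auto
  then show ?thesis unfolding up_degree_def by simp
qed

lemma Q_eq:
  assumes K: "simplicial_complex K" and g: "g \<in> chains K i"
  shows "signless_up_laplacian K i g = QQ (faces K i) (faces K (Suc i)) inc g"
proof
  fix F
  let ?S = "faces K i" and ?T = "faces K (Suc i)"
  have fS: "finite ?S" and fT: "finite ?T" using faces_finite[OF K] by auto
  show "signless_up_laplacian K i g F = QQ ?S ?T inc g F"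
  proof (cases "F \<in> ?S")
    case False then show ?thesis unfolding signless_up_laplacian_def QQ_def by simp
  next
    case True
    have "QQ ?S ?T inc g F = (\<Sum>t\<in>?T. inc t F * (\<Sum>G\<in>?S. inc t G * g G))"
      using True unfolding QQ_def sv_def by simp
    also have "\<dots> = (\<Sum>t\<in>?T. \<Sum>G\<in>?S. inc t F * inc t G * g G)"
      by (simp add: sum_distrib_left mult_ac)
    also have "\<dots> = (\<Sum>G\<in>?S. \<Sum>t\<in>?T. inc t F * inc t G * g G)"
      by (rule sum.swap)
    also have "\<dots> = (\<Sum>G\<in>?S. g G * real (card {t \<in> ?T. F \<subseteq> t \<and> G \<subseteq> t}))"
    proof (rule sum.cong[OF refl])
      fix G assume "G \<in> ?S"
      have "(\<Sum>t\<in>?T. inc t F * inc t G * g G) = (\<Sum>t\<in>?T. if F \<subseteq> t \<and> G \<subseteq> t then g G else 0)"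
        by (rule sum.cong) (auto simp: inc_def)
      also have "\<dots> = (\<Sum>t\<in>{t \<in> ?T. F \<subseteq> t \<and> G \<subseteq> t}. g G)"
        by (rule sum.inter_filter[OF fT, symmetric])
      also have "\<dots> = g G * real (card {t \<in> ?T. F \<subseteq> t \<and> G \<subseteq> t})" by simp
      finally show "(\<Sum>t\<in>?T. inc t F * inc t G * g G) = g G * real (card {t \<in> ?T. F \<subseteq> t \<and> G \<subseteq> t})" .
    qed
    also have "\<dots> = g F * real (card {t \<in> ?T. F \<subseteq> t}) +
        (\<Sum>G\<in>?S - {F}. g G * real (card {t \<in> ?T. F \<subseteq> t \<and> G \<subseteq> t}))"
      using True fS by (simp add: sum.remove)
    also have "(\<Sum>G\<in>?S - {F}. g G * real (card {t \<in> ?T. F \<subseteq> t \<and> G \<subseteq> t})) =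
        (\<Sum>G\<in>?S - {F}. if up_neighbors K i F G then g G else 0)"
    proof (rule sum.cong[OF refl])
      fix G assume G: "G \<in> ?S - {F}"
      show "g G * real (card {t \<in> ?T. F \<subseteq> t \<and> G \<subseteq> t}) = (if up_neighbors K i F G then g G else 0)"
      proof -
        have GS: "G \<in> ?S" "F \<noteq> G" using G by auto
        note pc = pair_cofaces[OF K True GS]
        show ?thesis
        proof (cases "F \<union> G \<in> ?T")
          case True
          then have "up_neighbors K i F G" unfolding up_neighbors_def using GS \<open>F \<in> ?S\<close> by simp
          then show ?thesis using pc True by simp
        next
          case False
          then have nu: "\<not> up_neighbors K i F G" unfolding up_neighbors_def by simp
          have es: "{t \<in> ?T. F \<subseteq> t \<and> G \<subseteq> t} = {}" using pc False by presburger
          show ?thesis by (subst es) (simp add: nu)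
        qed
      qed
    qed
    also have "\<dots> = (\<Sum>G\<in>{G \<in> ?S. up_neighbors K i F G}. g G)"
    proof -
      have "(\<Sum>G\<in>?S - {F}. if up_neighbors K i F G then g G else 0) =
            (\<Sum>G\<in>{G \<in> ?S - {F}. up_neighbors K i F G}. g G)"
        using fS by (intro sum.inter_filter[symmetric]) simp
      also have "{G \<in> ?S - {F}. up_neighbors K i F G} = {G \<in> ?S. up_neighbors K i F G}"
        unfolding up_neighbors_def by auto
      finally show ?thesis .
    qed
    finally have QF: "QQ ?S ?T inc g F = g F * real (card {t \<in> ?T. F \<subseteq> t}) +
        (\<Sum>G\<in>{G \<in> ?S. up_neighbors K i F G}. g G)" .
    have L: "signless_up_laplacian K i g F = real (up_degree K F) * g F +
        (\<Sum>G\<in>{G \<in> ?S. up_neighbors K i F G}. g G)"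
      using True unfolding signless_up_laplacian_def by (simp only: if_True)
    show ?thesis unfolding L QF up_degree_eq[OF True] by (simp only: mult.commute)
  qed
qed

lemma eigen_eq:
  assumes K: "simplicial_complex K"
  shows "eigenvalues_Qup K i = EV (faces K i) (faces K (Suc i)) inc"
proof -
  have "\<forall>g\<in>chains K i. signless_up_laplacian K i g = QQ (faces K i) (faces K (Suc i)) inc g"
    using Q_eq[OF K] by blast
  then show ?thesis unfolding eigenvalues_Qup_def EV_def chains_chn by (metis (no_types, lifting))
qed

lemma q_eq:
  assumes K: "simplicial_complex K"
  shows "q_spec K i = Max (EV (faces K i) (faces K (Suc i)) inc)"
  unfolding q_spec_def eigen_eq[OF K] ..

definition reach :: "nat set set \<Rightarrow> nat \<Rightarrow> nat set \<Rightarrow> nat set \<Rightarrow> bool" where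
  "reach K i F G \<longleftrightarrow> (\<exists>xs. xs \<noteq> [] \<and> hd xs = F \<and> last xs = G \<and> set xs \<subseteq> faces K i \<and>
        (\<forall>j. Suc j < length xs \<longrightarrow> up_neighbors K i (xs ! j) (xs ! Suc j)))"

lemma pcf_reach: "path_connected_faces K i \<longleftrightarrow> (\<forall>F\<in>faces K i. \<forall>G\<in>faces K i. reach K i F G)"
  unfolding path_connected_faces_def reach_def ..

lemma reach_refl: "F \<in> faces K i \<Longrightarrow> reach K i F F"
  unfolding reach_def by (rule exI[of _ "[F]"]) simp

lemma reach_in: "reach K i F G \<Longrightarrow> G \<in> faces K i"
  unfolding reach_def by (metis last_in_set subsetD)

lemma reach_in1: "reach K i F G \<Longrightarrow> F \<in> faces K i"
  unfolding reach_def by (metis hd_in_set subsetD)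

lemma reach_step:
  assumes "reach K i F G" "up_neighbors K i G H" shows "reach K i F H"
proof -
  obtain xs where xs: "xs \<noteq> []" "hd xs = F" "last xs = G" "set xs \<subseteq> faces K i"
    "\<forall>j. Suc j < length xs \<longrightarrow> up_neighbors K i (xs ! j) (xs ! Suc j)"
    using assms(1) unfolding reach_def by blast
  have H: "H \<in> faces K i" using assms(2) unfolding up_neighbors_def by simp
  show ?thesis unfolding reach_def
  proof (intro exI[of _ "xs @ [H]"] conjI allI impI)
    show "xs @ [H] \<noteq> []" by simp
    show "hd (xs @ [H]) = F" using xs by simp
    show "last (xs @ [H]) = H" by simp
    show "set (xs @ [H]) \<subseteq> faces K i" using xs H by simp
    fix j assume j: "Suc j < length (xs @ [H])"
    show "up_neighbors K i ((xs @ [H]) ! j) ((xs @ [H]) ! Suc j)"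
    proof (cases "Suc j < length xs")
      case True then show ?thesis using xs(5) by (simp add: nth_append)
    next
      case False
      then have "Suc j = length xs" using j by simp
      moreover have "xs ! j = G"
      proof -
        have "j = length xs - 1" using \<open>Suc j = length xs\<close> by simp
        then show ?thesis using xs(1,3) by (simp add: last_conv_nth)
      qed
      ultimately show ?thesis using assms(2) by (simp add: nth_append)
    qed
  qed
qed

lemma reach_induct:
  assumes "reach K i F G" "P F"
    and step: "\<And>G H. reach K i F G \<Longrightarrow> P G \<Longrightarrow> up_neighbors K i G H \<Longrightarrow> P H"
  shows "P G"
proof -
  obtain xs where xs: "xs \<noteq> []" "hd xs = F" "last xs = G" "set xs \<subseteq> faces K i"
    "\<forall>j. Suc j < length xs \<longrightarrow> up_neighbors K i (xs ! j) (xs ! Suc j)"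
    using assms(1) unfolding reach_def by blast
  have "\<forall>k < length xs. reach K i F (xs ! k) \<and> P (xs ! k)"
  proof (intro allI impI)
    fix k assume "k < length xs"
    then show "reach K i F (xs ! k) \<and> P (xs ! k)"
    proof (induction k)
      case 0
      have "xs ! 0 = F" using xs(1,2) by (simp add: hd_conv_nth)
      moreover have "F \<in> faces K i" using xs(1,2,4) by (metis hd_in_set subsetD)
      ultimately show ?case using assms(2) reach_refl by simp
    next
      case (Suc k)
      then have IH: "reach K i F (xs ! k) \<and> P (xs ! k)" by simp
      have un: "up_neighbors K i (xs ! k) (xs ! Suc k)" using xs(5) Suc.prems by blast
      show ?case using IH un step reach_step by blast
    qed
  qed
  moreover have "xs ! (length xs - 1) = G" using xs(1,3) by (simp add: last_conv_nth)
  ultimately show ?thesis using xs(1) by (metis diff_less length_greater_0_conv zero_less_one)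
qed

lemma reach_sym: assumes "reach K i F G" shows "reach K i G F"
  using assms(1)
proof (rule reach_induct[where P = "\<lambda>H. reach K i H F"])
  show "reach K i F F" using reach_in1[OF assms] by (rule reach_refl)
next
  fix G H assume "reach K i F G" "reach K i G F" "up_neighbors K i G H"
  then show "reach K i H F"
  proof -
    have "reach K i H H" using \<open>up_neighbors K i G H\<close> unfolding up_neighbors_def by (simp add: reach_refl)
    then have "reach K i H G" using reach_step up_nb_sym[OF \<open>up_neighbors K i G H\<close>] by blast
    show ?thesis
      using \<open>reach K i G F\<close>
    proof (rule reach_induct[where P = "\<lambda>X. reach K i H X"])
      show "reach K i H G" by fact
    next
      fix X Y assume "reach K i H X" "up_neighbors K i X Y"
      then show "reach K i H Y" by (rule reach_step)
    qed
  qed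
qed

lemma reach_trans: assumes "reach K i F G" "reach K i G H" shows "reach K i F H"
  using assms(2)
proof (rule reach_induct[where P = "\<lambda>X. reach K i F X"])
  show "reach K i F G" by fact
next
  fix X Y assume "reach K i F X" "up_neighbors K i X Y"
  then show "reach K i F Y" by (rule reach_step)
qed

lemma card_le_pure:
  assumes K: "simplicial_complex K" and p: "pure_of_dim K d" and G: "G \<in> K"
  shows "card G \<le> Suc d"
proof -
  define A where "A = {H \<in> K. G \<subseteq> H}"
  have "finite A" unfolding A_def using sc_finite[OF K] by simp
  moreover have "A \<noteq> {}" unfolding A_def using G by blast
  ultimately obtain m where m: "m \<in> A" "\<forall>b\<in>A. m \<le> b \<longrightarrow> m = b"
    using finite_has_maximal by blast
  have "m \<in> facets K" unfolding facets_def using m unfolding A_def by auto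
  then have "card m = d + 1" using p unfolding pure_of_dim_def by blast
  moreover have "card G \<le> card m"
    using m(1) sc_face_finite[OF K] unfolding A_def by (auto intro: card_mono)
  ultimately show ?thesis by simp
qed

lemma sign_swap:
  fixes H :: "nat set"
  assumes H: "finite H" and w: "w \<notin> H" and v: "v \<notin> H" and wv: "w \<noteq> v"
  shows "(-1::real) ^ card {u \<in> H. u < w} * (-1) ^ card {u \<in> insert w H. u < v} =
         - ((-1) ^ card {u \<in> H. u < v} * (-1) ^ card {u \<in> insert v H. u < w})"
proof (cases "w < v")
  case True
  have e1: "{u \<in> insert w H. u < v} = insert w {u \<in> H. u < v}" using True by auto
  have e2: "{u \<in> insert v H. u < w} = {u \<in> H. u < w}" using True by auto
  have "card {u \<in> insert w H. u < v} = Suc (card {u \<in> H. u < v})"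
    unfolding e1 using H w by (simp add: card_insert_if)
  then show ?thesis unfolding e2 by simp
next
  case False
  then have F: "v < w" using wv by simp
  have e1: "{u \<in> insert v H. u < w} = insert v {u \<in> H. u < w}" using F by auto
  have e2: "{u \<in> insert w H. u < v} = {u \<in> H. u < v}" using F by auto
  have "card {u \<in> insert v H. u < w} = Suc (card {u \<in> H. u < w})"
    unfolding e1 using H v by (simp add: card_insert_if)
  then show ?thesis unfolding e2 by simp
qed

lemma boundary_zero: "boundary K j (\<lambda>_. 0) = (\<lambda>_. 0)"
  unfolding boundary_def using [[show_types]] apply (rule ext) apply simp
  done

lemma image_top:
  assumes "faces K (Suc r) = {}"
  shows "boundary K (Suc r) ` chains K (Suc r) = {\<lambda>_. 0}"
proof -
  have "chains K (Suc r) = {\<lambda>_. 0}" unfolding chains_def assms by auto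
  then show ?thesis using boundary_zero by simp
qed

locale addf =
  fixes K :: "nat set set" and i :: nat and F :: "nat set" and x y :: nat and C :: "nat set \<Rightarrow> bool"
  assumes K: "simplicial_complex K" and pure: "pure_of_dim K (Suc i)"
    and CF: "C F" and Cin: "\<And>G. C G \<Longrightarrow> G \<in> faces K i"
    and Ccl: "\<And>G H. C G \<Longrightarrow> up_neighbors K i G H \<Longrightarrow> C H"
    and xF: "x \<in> F" and yF: "y \<notin> F" and yV: "y \<in> vertices K"
    and nC: "\<not> C (insert y (F - {x}))" and sK: "insert y F \<notin> K"
begin

definition "sg" :: "nat \<Rightarrow> nat set \<Rightarrow> real" where "sg v G = (-1) ^ card {u \<in> G. u < v}"
abbreviation "sig \<equiv> insert y F"
definition "K' = K \<union> {G. G \<subseteq> sig}"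
abbreviation "H0 \<equiv> F - {x}"

lemma FK: "F \<in> faces K i" using Cin[OF CF] .
lemma Ffin: "finite F" using FK sc_face_finite[OF K] unfolding faces_def by blast
lemma Fcard: "card F = Suc i" using FK unfolding faces_def by simp
lemma sfin: "finite sig" using Ffin by simp
lemma scard: "card sig = Suc (Suc i)" using Ffin Fcard yF by simp
lemma FV: "F \<subseteq> vertices K" using FK unfolding faces_def vertices_def by auto
lemma sV: "sig \<subseteq> vertices K" using FV yV by simp
lemma Vfin: "finite (vertices K)"
  unfolding vertices_def using sc_finite[OF K] sc_face_finite[OF K] by (intro finite_Union) auto
lemma KK': "K \<subseteq> K'" unfolding K'_def by auto
lemma sK': "sig \<in> K'" unfolding K'_def by auto

lemma cardK: "G \<in> K \<Longrightarrow> card G \<le> Suc (Suc i)"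
  using card_le_pure[OF K pure] by simp

lemma K'_cases: "G \<in> K' \<Longrightarrow> G \<in> K \<or> G \<subseteq> sig"
  unfolding K'_def by auto

lemma cardK': "G \<in> K' \<Longrightarrow> card G \<le> Suc (Suc i)"
  using cardK K'_cases card_mono[OF sfin] scard by fastforce

lemma sub_sig_eq: "G \<subseteq> sig \<Longrightarrow> card G = Suc (Suc i) \<Longrightarrow> G = sig"
  using card_subset_eq[OF sfin] scard by simp

lemma sc': "simplicial_complex K'"
  unfolding simplicial_complex_def
proof (intro conjI ballI allI impI)
  show "finite K'" unfolding K'_def using sc_finite[OF K] sfin by simp
next
  fix G assume "G \<in> K'" then show "finite G"
    using K'_cases sc_face_finite[OF K] sfin finite_subset by blast
next
  fix G H assume "G \<in> K'" "H \<subseteq> G" then show "H \<in> K'"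
    using K'_cases sc_sub[OF K] unfolding K'_def by blast
qed

lemma vert': "vertices K' = vertices K"
  unfolding vertices_def K'_def using sV unfolding vertices_def by auto

lemma pure': "pure_of_dim K' (Suc i)"
  unfolding pure_of_dim_def
proof (intro conjI ballI)
  have "\<not> (\<exists>G\<in>K'. sig \<subset> G)"
  proof
    assume "\<exists>G\<in>K'. sig \<subset> G"
    then obtain G where G: "G \<in> K'" "sig \<subset> G" by blast
    then have "card sig < card G"
      using psubset_card_mono sc_face_finite[OF sc'] by blast
    then show False using cardK'[OF G(1)] scard by simp
  qed
  then have "sig \<in> facets K'" unfolding facets_def using sK' by simp
  then show "facets K' \<noteq> {}" by blast
next
  fix G assume G: "G \<in> facets K'"
  then have GK': "G \<in> K'" and mx: "\<not> (\<exists>H\<in>K'. G \<subset> H)" unfolding facets_def by auto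
  show "card G = Suc i + 1"
  proof (cases "G \<subseteq> sig")
    case True
    then have "G = sig" using mx sK' by blast
    then show ?thesis using scard by simp
  next
    case False
    then have "G \<in> K" using K'_cases[OF GK'] by blast
    moreover have "\<not> (\<exists>H\<in>K. G \<subset> H)" using mx KK' by blast
    ultimately have "G \<in> facets K" unfolding facets_def by simp
    then show ?thesis using pure unfolding pure_of_dim_def by blast
  qed
qed

lemma top_empty: "faces K (Suc (Suc i)) = {}" "faces K' (Suc (Suc i)) = {}"
  unfolding faces_def using cardK cardK' by fastforce+

lemma bd_form: "boundary L (Suc i) c G = (if G \<in> faces L i then
   (\<Sum>v\<in>{v \<in> vertices L - G. insert v G \<in> L}. sg v G * c (insert v G)) else 0)"
  unfolding boundary_def sg_def by simp

lemma chains_sub: "c \<in> chains K (Suc i) \<Longrightarrow> c \<in> chains K' (Suc i) \<and> c sig = 0"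
  unfolding chains_def faces_def using KK' sK by auto

lemma chains_back: assumes "c \<in> chains K' (Suc i)" "c sig = 0" shows "c \<in> chains K (Suc i)"
  unfolding chains_def
proof (intro CollectI allI impI)
  fix t assume t: "t \<notin> faces K (Suc i)"
  show "c t = 0"
  proof (cases "t \<in> faces K' (Suc i)")
    case True
    then have tK': "t \<in> K'" and ct: "card t = Suc (Suc i)" unfolding faces_def by auto
    show ?thesis
    proof (cases "t \<in> K")
      case True then show ?thesis using t ct unfolding faces_def by simp
    next
      case False
      then have "t \<subseteq> sig" using K'_cases[OF tK'] by blast
      then have "t = sig" using sub_sig_eq ct by simp
      then show ?thesis using assms(2) by simp
    qed
  next
    case False then show ?thesis using assms(1) unfolding chains_def by simp
  qed
qed

lemma ins_sig: assumes "insert v G \<in> K'" "insert v G \<notin> K" "v \<notin> G" "card G = Suc i" "finite G"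
  shows "insert v G = sig"
proof -
  have "insert v G \<subseteq> sig" using K'_cases[OF assms(1)] assms(2) by blast
  moreover have "card (insert v G) = Suc (Suc i)" using assms(3-5) by simp
  ultimately show ?thesis using sub_sig_eq by simp
qed

lemma bd_eq: assumes c: "c \<in> chains K' (Suc i)" "c sig = 0"
  shows "boundary K' (Suc i) c = boundary K (Suc i) c"
proof
  fix G
  show "boundary K' (Suc i) c G = boundary K (Suc i) c G"
  proof (cases "G \<in> faces K' i")
    case False
    then have "G \<notin> faces K i" using KK' unfolding faces_def by auto
    then show ?thesis using False by (simp add: bd_form)
  next
    case GK': True
    have Gfin: "finite G" and Gc: "card G = Suc i" using GK' sc_face_finite[OF sc'] unfolding faces_def by auto
    have zero: "c (insert v G) = 0" if "v \<notin> G" "insert v G \<in> K'" "insert v G \<notin> K" for v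
      using ins_sig[OF that(2,3,1) Gc Gfin] c(2) by simp
    show ?thesis
    proof (cases "G \<in> faces K i")
      case True
      have fin: "finite {v \<in> vertices K - G. insert v G \<in> K'}"
        using Vfin by simp
      have "(\<Sum>v\<in>{v \<in> vertices K - G. insert v G \<in> K'}. sg v G * c (insert v G)) =
            (\<Sum>v\<in>{v \<in> vertices K - G. insert v G \<in> K}. sg v G * c (insert v G))"
      proof (rule sum.mono_neutral_right[OF fin])
        show "{v \<in> vertices K - G. insert v G \<in> K} \<subseteq> {v \<in> vertices K - G. insert v G \<in> K'}"
          using KK' by blast
        show "\<forall>v\<in>{v \<in> vertices K - G. insert v G \<in> K'} - {v \<in> vertices K - G. insert v G \<in> K}.
            sg v G * c (insert v G) = 0"
        proof
          fix v assume v: "v \<in> {v \<in> vertices K - G. insert v G \<in> K'} - {v \<in> vertices K - G. insert v G \<in> K}"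
          then have "v \<notin> G" "insert v G \<in> K'" "insert v G \<notin> K" by auto
          then show "sg v G * c (insert v G) = 0" using zero by simp
        qed
      qed
      then show ?thesis using True GK' by (simp add: bd_form vert')
    next
      case False
      have "G \<notin> K" using False Gc unfolding faces_def by simp
      then have "(\<Sum>v\<in>{v \<in> vertices K - G. insert v G \<in> K'}. sg v G * c (insert v G)) = 0"
      proof (intro sum.neutral ballI)
        fix v assume v: "v \<in> {v \<in> vertices K - G. insert v G \<in> K'}"
        then have v1: "v \<notin> G" "insert v G \<in> K'" by auto
        have "insert v G \<notin> K"
        proof
          assume "insert v G \<in> K"
          then have "G \<in> K" using sc_sub[OF K, of "insert v G" G] by blast
          then show False using \<open>G \<notin> K\<close> by simp
        qed
        then show "sg v G * c (insert v G) = 0" using zero v1 by simp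
      qed
      then show ?thesis using False GK' by (simp add: bd_form vert')
    qed
  qed
qed

lemma Hfin: "finite H0" using Ffin by simp
lemma Hcard: "card H0 = i" using Fcard xF Ffin by simp
lemma insF: "insert x H0 = F" using xF by auto

lemma key: assumes c: "c \<in> chains K' (Suc i)" and bz: "boundary K' (Suc i) c = 0"
  shows "c sig = 0"
proof -
  define V where "V = vertices K"
  define W where "W = {w \<in> V - H0. C (insert w H0)}"
  define Vs where "Vs = (\<lambda>w. {v \<in> V - insert w H0. insert v (insert w H0) \<in> K'})"
  define t where "t = (\<lambda>p. sg (fst p) H0 * (sg (snd p) (insert (fst p) H0) *
      c (insert (snd p) (insert (fst p) H0))))"
  define D where "D = Sigma W Vs"
  have Vf: "finite V" unfolding V_def by (rule Vfin)
  have Wf: "finite W" unfolding W_def using Vf by simp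
  have Vsf: "\<And>w. finite (Vs w)" unfolding Vs_def using Vf by simp
  have finD: "finite D" unfolding D_def using Wf Vsf by simp
  have Wface: "insert w H0 \<in> faces K' i" if "w \<in> W" for w
    using that Cin KK' unfolding W_def faces_def by auto
  have "(\<Sum>w\<in>W. sg w H0 * boundary K' (Suc i) c (insert w H0)) = 0"
    using bz by simp
  moreover have "(\<Sum>w\<in>W. sg w H0 * boundary K' (Suc i) c (insert w H0)) = (\<Sum>p\<in>D. t p)"
  proof -
    have "(\<Sum>w\<in>W. sg w H0 * boundary K' (Suc i) c (insert w H0)) =
          (\<Sum>w\<in>W. \<Sum>v\<in>Vs w. t (w, v))"
    proof (rule sum.cong[OF refl])
      fix w assume w: "w \<in> W"
      have "boundary K' (Suc i) c (insert w H0) =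
          (\<Sum>v\<in>Vs w. sg v (insert w H0) * c (insert v (insert w H0)))"
        using Wface[OF w] unfolding bd_form vert' Vs_def V_def by simp
      then show "sg w H0 * boundary K' (Suc i) c (insert w H0) = (\<Sum>v\<in>Vs w. t (w, v))"
        unfolding t_def by (simp add: sum_distrib_left)
    qed
    also have "\<dots> = (\<Sum>p\<in>D. t p)" unfolding D_def
      using sum.Sigma[OF Wf, of Vs "\<lambda>w v. t (w, v)"] Vsf by simp
    finally show ?thesis .
  qed
  ultimately have sumD: "(\<Sum>p\<in>D. t p) = 0" by simp
  define D1 where "D1 = {p \<in> D. prod.swap p \<in> D}"
  have tswap: "t (prod.swap p) = - t p" if p: "p \<in> D" for p
  proof -
    obtain w v where pw: "p = (w, v)" by (cases p)
    have w: "w \<notin> H0" and v: "v \<notin> insert w H0"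
      using p unfolding pw D_def W_def Vs_def by auto
    have "sg w H0 * sg v (insert w H0) = - (sg v H0 * sg w (insert v H0))"
      unfolding sg_def using sign_swap[OF Hfin w, of v] v by auto
    then have e: "sg v H0 * sg w (insert v H0) = - (sg w H0 * sg v (insert w H0))" by linarith
    have ic: "insert w (insert v H0) = insert v (insert w H0)" by (rule insert_commute)
    have "t (prod.swap p) = (sg v H0 * sg w (insert v H0)) * c (insert v (insert w H0))"
      unfolding pw t_def using ic by simp
    also have "\<dots> = - ((sg w H0 * sg v (insert w H0)) * c (insert v (insert w H0)))"
      unfolding e by simp
    also have "\<dots> = - t p" unfolding pw t_def by simp
    finally show ?thesis .
  qed
  have sumD1: "(\<Sum>p\<in>D1. t p) = 0"
  proof -
    have "(\<Sum>p\<in>D1. t p) = (\<Sum>p\<in>D1. - t p)"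
      by (rule sum.reindex_bij_witness[of D1 prod.swap prod.swap])
         (auto simp: D1_def tswap)
    then show ?thesis by (simp add: sum_negf)
  qed
  have D2: "D - D1 = {(x, y)}"
  proof
    show "{(x, y)} \<subseteq> D - D1"
    proof -
      have xW: "x \<in> W" unfolding W_def V_def using xF FV insF CF by auto
      have yVs: "y \<in> Vs x" unfolding Vs_def V_def using yV yF insF sK' by auto
      have "(y, x) \<notin> D" unfolding D_def W_def using nC by auto
      then show ?thesis using xW yVs unfolding D_def D1_def by auto
    qed
  next
    show "D - D1 \<subseteq> {(x, y)}"
    proof
      fix p assume p: "p \<in> D - D1"
      obtain w v where pw: "p = (w, v)" by (cases p)
      have wV: "w \<in> V" and wH: "w \<notin> H0" and Cw: "C (insert w H0)"
        and vV: "v \<in> V" and vw: "v \<notin> insert w H0" and tK': "insert v (insert w H0) \<in> K'"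
        using p unfolding pw D_def W_def Vs_def by auto
      have nD: "(v, w) \<notin> D" using p unfolding pw D1_def by auto
      have nCv: "\<not> C (insert v H0)"
      proof
        assume Cv: "C (insert v H0)"
        have "(v, w) \<in> D" unfolding D_def W_def Vs_def
          using vV vw wV wH Cv tK' by (auto simp: insert_commute)
        then show False using nD by simp
      qed
      have gw: "insert w H0 \<in> faces K i" using Cin[OF Cw] .
      have tnK: "insert v (insert w H0) \<notin> K"
      proof
        assume tK: "insert v (insert w H0) \<in> K"
        have ct: "card (insert v (insert w H0)) = Suc (Suc i)" using Hfin Hcard wH vw by simp
        have tT: "insert v (insert w H0) \<in> faces K (Suc i)" using tK ct unfolding faces_def by simp
        have "insert v H0 \<in> K" by (rule sc_sub[OF K tK]) blast
        moreover have "card (insert v H0) = Suc i" using Hfin Hcard vw by simp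
        ultimately have gv: "insert v H0 \<in> faces K i" unfolding faces_def by simp
        have ne: "insert w H0 \<noteq> insert v H0"
        proof
          assume "insert w H0 = insert v H0"
          then have "w \<in> insert v H0" by blast
          then show False using vw wH by blast
        qed
        have un: "insert w H0 \<union> insert v H0 = insert v (insert w H0)" by blast
        have "up_neighbors K i (insert w H0) (insert v H0)"
          unfolding up_neighbors_def using gw gv tT ne un by simp
        then have "C (insert v H0)" using Ccl[OF Cw] by blast
        then show False using nCv by simp
      qed
      have cw: "card (insert w H0) = Suc i" using Hfin Hcard wH by simp
      have "insert v (insert w H0) = sig"
        using ins_sig[OF tK' tnK vw cw] Hfin by simp
      then have eqs: "insert v (insert w H0) = insert y (insert x H0)" using insF by simp
      have "w = x \<or> w = y" using eqs wH by blast
      moreover have "w \<noteq> y" using Cw nC by auto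
      ultimately have wx: "w = x" by simp
      have "v = x \<or> v = y" using eqs vw by blast
      then have "v = y" using vw wx by auto
      then show "p \<in> {(x, y)}" using wx pw by simp
    qed
  qed
  have "(\<Sum>p\<in>D. t p) = (\<Sum>p\<in>D - D1. t p) + (\<Sum>p\<in>D1. t p)"
    by (rule sum.subset_diff) (auto simp: D1_def finD)
  then have "t (x, y) = 0" using sumD sumD1 D2 by simp
  then have "sg x H0 * (sg y F * c sig) = 0" unfolding t_def using insF by simp
  moreover have "sg x H0 \<noteq> 0" "sg y F \<noteq> 0" unfolding sg_def by auto
  ultimately show ?thesis by simp
qed

lemma Z_eq: "{c \<in> chains K' (Suc i). boundary K' (Suc i) c = 0} = {c \<in> chains K (Suc i). boundary K (Suc i) c = 0}"
proof
  show "{c \<in> chains K' (Suc i). boundary K' (Suc i) c = 0} \<subseteq> {c \<in> chains K (Suc i). boundary K (Suc i) c = 0}"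
  proof
    fix c assume "c \<in> {c \<in> chains K' (Suc i). boundary K' (Suc i) c = 0}"
    then have c: "c \<in> chains K' (Suc i)" "boundary K' (Suc i) c = 0" by auto
    have cs: "c sig = 0" using key[OF c] .
    show "c \<in> {c \<in> chains K (Suc i). boundary K (Suc i) c = 0}"
      using chains_back[OF c(1) cs] bd_eq[OF c(1) cs] c(2) by simp
  qed
next
  show "{c \<in> chains K (Suc i). boundary K (Suc i) c = 0} \<subseteq> {c \<in> chains K' (Suc i). boundary K' (Suc i) c = 0}"
  proof
    fix c assume "c \<in> {c \<in> chains K (Suc i). boundary K (Suc i) c = 0}"
    then have c: "c \<in> chains K (Suc i)" "boundary K (Suc i) c = 0" by auto
    have c': "c \<in> chains K' (Suc i)" "c sig = 0" using chains_sub[OF c(1)] by auto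
    show "c \<in> {c \<in> chains K' (Suc i). boundary K' (Suc i) c = 0}"
      using c' bd_eq[OF c'] c(2) by simp
  qed
qed

lemma betti_eq: "betti K' (Suc i) = betti K (Suc i)"
  unfolding betti_def Z_eq Suc_eq_plus1[symmetric]
  using image_top[OF top_empty(1)] image_top[OF top_empty(2)] by simp

lemma inK: "K' \<in> cK (card (vertices K)) (Suc i) (betti K (Suc i))"
  unfolding cK_def using sc' vert' pure' betti_eq by simp

lemma faces_i: "faces K i \<subseteq> faces K' i"
  using KK' unfolding faces_def by auto

lemma faces_Si: "faces K' (Suc i) = insert sig (faces K (Suc i))" "sig \<notin> faces K (Suc i)"
proof -
  show "faces K' (Suc i) = insert sig (faces K (Suc i))"
  proof
    show "faces K' (Suc i) \<subseteq> insert sig (faces K (Suc i))"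
    proof
      fix t assume t: "t \<in> faces K' (Suc i)"
      then have tK': "t \<in> K'" and ct: "card t = Suc (Suc i)" unfolding faces_def by auto
      show "t \<in> insert sig (faces K (Suc i))"
      proof (cases "t \<in> K")
        case True then show ?thesis using ct unfolding faces_def by simp
      next
        case False
        then have "t \<subseteq> sig" using K'_cases[OF tK'] by blast
        then show ?thesis using sub_sig_eq ct by simp
      qed
    qed
    show "insert sig (faces K (Suc i)) \<subseteq> faces K' (Suc i)"
      using sK' scard KK' unfolding faces_def by auto
  qed
  show "sig \<notin> faces K (Suc i)" using sK unfolding faces_def by simp
qed

end

lemma L_at: "F \<in> faces K i \<Longrightarrow> signless_up_laplacian K i g F =
   real (up_degree K F) * g F + (\<Sum>G\<in>{G \<in> faces K i. up_neighbors K i F G}. g G)"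
  unfolding signless_up_laplacian_def by simp

lemma PQ_eig:
  assumes K: "simplicial_complex K" and g: "g \<in> chains K i"
    and e: "signless_up_laplacian K i g = (\<lambda>x. mu * g x)"
  shows "PQ (faces K i) (faces K (Suc i)) inc g = mu * ip (faces K i) g g"
proof -
  have "QQ (faces K i) (faces K (Suc i)) inc g = (\<lambda>x. mu * g x)" using Q_eq[OF K g] e by simp
  then have "ip (faces K i) (QQ (faces K i) (faces K (Suc i)) inc g) g = mu * ip (faces K i) g g"
    by (simp add: ip_scale_left)
  then show ?thesis using ip_QQ[OF faces_finite[OF K]] PQ_BQ by metis
qed

lemma top_nonneg:
  assumes K: "simplicial_complex K" and ne: "faces K i \<noteq> {}"
  shows "\<exists>f\<in>chains K i. f \<noteq> 0 \<and> (\<forall>x. f x \<ge> 0) \<and>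
           signless_up_laplacian K i f = (\<lambda>x. q_spec K i * f x)"
proof -
  let ?S = "faces K i" and ?T = "faces K (Suc i)"
  have fS: "finite ?S" and fT: "finite ?T" using faces_finite[OF K] by auto
  note sp = spectral[OF fS ne fT, of inc]
  define M where "M = Max (EV ?S ?T inc)"
  have qM: "q_spec K i = M" unfolding M_def by (rule q_eq[OF K])
  have "M \<in> EV ?S ?T inc" using sp unfolding M_def by blast
  then obtain g0 where g0: "g0 \<in> chn ?S" "g0 \<noteq> 0" "QQ ?S ?T inc g0 = (\<lambda>x. M * g0 x)"
    unfolding EV_def by blast
  have P0: "PQ ?S ?T inc g0 = M * ip ?S g0 g0"
  proof -
    have "ip ?S (QQ ?S ?T inc g0) g0 = M * ip ?S g0 g0" using g0(3) by (simp add: ip_scale_left)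
    then show ?thesis using ip_QQ[OF fS] PQ_BQ by metis
  qed
  define f where "f = (\<lambda>x. \<bar>g0 x\<bar>)"
  have fc: "f \<in> chn ?S" using g0(1) unfolding f_def chn_def by simp
  have ipf: "ip ?S f f = ip ?S g0 g0" unfolding ip_def f_def by simp
  have "PQ ?S ?T inc g0 \<le> PQ ?S ?T inc f"
    unfolding PQ_def
  proof (rule sum_mono)
    fix t
    have "\<bar>sv ?S inc t g0\<bar> \<le> (\<Sum>G\<in>?S. \<bar>inc t G * g0 G\<bar>)" unfolding sv_def by (rule sum_abs)
    also have "\<dots> = sv ?S inc t f" unfolding sv_def f_def inc_def by (simp add: abs_mult)
    finally have "\<bar>sv ?S inc t g0\<bar> \<le> \<bar>sv ?S inc t f\<bar>" by simp
    then show "(sv ?S inc t g0)\<^sup>2 \<le> (sv ?S inc t f)\<^sup>2" by (simp add: abs_le_square_iff)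
  qed
  moreover have "PQ ?S ?T inc f \<le> M * ip ?S f f" using sp fc unfolding M_def by blast
  ultimately have "PQ ?S ?T inc f = M * ip ?S f f" using P0 ipf by simp
  then have Qf: "QQ ?S ?T inc f = (\<lambda>x. M * f x)" using sp fc unfolding M_def by blast
  have fch: "f \<in> chains K i" using fc chains_chn by simp
  have "signless_up_laplacian K i f = (\<lambda>x. q_spec K i * f x)" using Q_eq[OF K fch] Qf qM by simp
  moreover have "f \<noteq> 0" using g0(2) unfolding f_def by (auto simp: fun_eq_iff)
  ultimately show ?thesis using fch unfolding f_def by auto
qed

lemma component:
  assumes K: "simplicial_complex K" and f: "f \<in> chains K i" "\<forall>x. f x \<ge> 0"
    and e: "signless_up_laplacian K i f = (\<lambda>x. M * f x)" and F0: "f F0 > 0"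
  defines "fC \<equiv> (\<lambda>G. if reach K i F0 G then f G else 0)"
  shows "fC \<in> chains K i" "\<forall>x. fC x \<ge> 0" "signless_up_laplacian K i fC = (\<lambda>x. M * fC x)"
    "\<forall>G. reach K i F0 G \<longrightarrow> fC G > 0"
proof -
  have F0S: "F0 \<in> faces K i" using f(1) F0 unfolding chains_def by force
  show fCc: "fC \<in> chains K i" unfolding fC_def chains_def using reach_in by auto
  show nn: "\<forall>x. fC x \<ge> 0" unfolding fC_def using f(2) by simp
  show eC: "signless_up_laplacian K i fC = (\<lambda>x. M * fC x)"
  proof
    fix F
    show "signless_up_laplacian K i fC F = M * fC F"
    proof (cases "F \<in> faces K i")
      case False
      then have "\<not> reach K i F0 F" using reach_in by blast
      then show ?thesis using False unfolding signless_up_laplacian_def fC_def by simp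
    next
      case True
      show ?thesis
      proof (cases "reach K i F0 F")
        case r: True
        have "(\<Sum>G\<in>{G \<in> faces K i. up_neighbors K i F G}. fC G) =
              (\<Sum>G\<in>{G \<in> faces K i. up_neighbors K i F G}. f G)"
        proof (rule sum.cong[OF refl])
          fix G assume "G \<in> {G \<in> faces K i. up_neighbors K i F G}"
          then have "reach K i F0 G" using reach_step[OF r] by blast
          then show "fC G = f G" unfolding fC_def by simp
        qed
        then have "signless_up_laplacian K i fC F = signless_up_laplacian K i f F"
          unfolding L_at[OF True] using r by (simp add: fC_def)
        then show ?thesis using e r by (simp add: fC_def fun_eq_iff)
      next
        case r: False
        have "(\<Sum>G\<in>{G \<in> faces K i. up_neighbors K i F G}. fC G) = 0"
        proof (rule sum.neutral, rule ballI)
          fix G assume "G \<in> {G \<in> faces K i. up_neighbors K i F G}"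
          then have "up_neighbors K i G F" using up_nb_sym by blast
          then have "\<not> reach K i F0 G" using r reach_step by blast
          then show "fC G = 0" unfolding fC_def by simp
        qed
        then show ?thesis unfolding L_at[OF True] using r by (simp add: fC_def)
      qed
    qed
  qed
  show "\<forall>G. reach K i F0 G \<longrightarrow> fC G > 0"
  proof (intro allI impI)
    fix G assume "reach K i F0 G"
    then show "fC G > 0"
    proof (rule reach_induct)
      show "fC F0 > 0" using F0 reach_refl[OF F0S] unfolding fC_def by simp
    next
      fix G H assume rG: "reach K i F0 G" and pG: "fC G > 0" and un: "up_neighbors K i G H"
      have HS: "H \<in> faces K i" using un unfolding up_neighbors_def by simp
      have unHG: "up_neighbors K i H G" by (rule up_nb_sym[OF un])
      have "G \<in> faces K i" using un unfolding up_neighbors_def by simp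
      then have GS: "G \<in> {G' \<in> faces K i. up_neighbors K i H G'}" using unHG by simp
      have fin: "finite {G' \<in> faces K i. up_neighbors K i H G'}" using faces_finite[OF K] by simp
      have "fC G \<le> (\<Sum>G'\<in>{G' \<in> faces K i. up_neighbors K i H G'}. fC G')"
        using member_le_sum[OF GS, of fC] nn fin by blast
      moreover have "0 \<le> real (up_degree K H) * fC H" using nn by simp
      ultimately have "fC G \<le> signless_up_laplacian K i fC H" unfolding L_at[OF HS] by linarith
      then have "M * fC H > 0" using eC pG by (simp add: fun_eq_iff)
      then have "fC H \<noteq> 0" by auto
      then show "fC H > 0" using nn by (metis less_eq_real_def)
    qed
  qed
qed

lemma faces_sub_V: "G \<in> faces K i \<Longrightarrow> G \<subseteq> vertices K"
  unfolding faces_def vertices_def by auto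

lemma faces_ne:
  assumes K: "simplicial_complex K" and p: "pure_of_dim K (Suc i)"
  shows "faces K i \<noteq> {}"
proof -
  obtain t where t: "t \<in> facets K" using p unfolding pure_of_dim_def by blast
  then have tK: "t \<in> K" and ct: "card t = Suc (Suc i)" using p unfolding facets_def pure_of_dim_def by auto
  obtain G where G: "G \<subseteq> t" "card G = Suc i" using obtain_subset_with_card_n[of "Suc i" t] ct by auto
  have "G \<in> K" using sc_sub[OF K tK G(1)] .
  then show ?thesis using G(2) unfolding faces_def by auto
qed

theorem mainTheorem4:
  fixes n r \<beta> :: nat and K :: "nat set set"
  assumes "1 \<le> r"
    and "K \<in> cK n r \<beta>"
    and "\<forall>K' \<in> cK n r \<beta>. q_spec K' (r - 1) \<le> q_spec K (r - 1)"
  shows "(\<forall>A. A \<subseteq> vertices K \<and> card A = r \<longrightarrow> A \<in> faces K (r - 1))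
         \<and> path_connected_faces K (r - 1)"
proof -
  obtain i where r: "r = Suc i" using assms(1) by (cases r) auto
  have ri: "r - 1 = i" using r by simp
  have K: "simplicial_complex K" and nV: "card (vertices K) = n"
    and pure: "pure_of_dim K (Suc i)" and bet: "betti K (Suc i) = \<beta>"
    using assms(2) unfolding cK_def r by auto
  have max: "\<And>K'. K' \<in> cK n (Suc i) \<beta> \<Longrightarrow> q_spec K' i \<le> q_spec K i"
    using assms(3) unfolding r by simp
  let ?S = "faces K i" and ?T = "faces K (Suc i)"
  have Sne: "?S \<noteq> {}" by (rule faces_ne[OF K pure])
  define M where "M = q_spec K i"
  obtain f where f: "f \<in> chains K i" "f \<noteq> 0" "\<forall>x. f x \<ge> 0"
    "signless_up_laplacian K i f = (\<lambda>x. M * f x)"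
    using top_nonneg[OF K Sne] unfolding M_def by blast
  obtain F0 where F0: "f F0 \<noteq> 0" using f(2) by (auto simp: fun_eq_iff)
  then have F0p: "f F0 > 0" using f(3) by (metis less_eq_real_def)
  define fC where "fC = (\<lambda>G. if reach K i F0 G then f G else 0)"
  have comp: "fC \<in> chains K i" "\<forall>x. fC x \<ge> 0" "signless_up_laplacian K i fC = (\<lambda>x. M * fC x)"
    "\<forall>G. reach K i F0 G \<longrightarrow> fC G > 0"
    using component[OF K f(1,3,4) F0p] unfolding fC_def by auto
  have all: "\<forall>B. B \<subseteq> vertices K \<and> card B = Suc i \<longrightarrow> reach K i F0 B"
  proof (rule ccontr)
    assume "\<not> (\<forall>B. B \<subseteq> vertices K \<and> card B = Suc i \<longrightarrow> reach K i F0 B)"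
    then obtain B where B: "B \<subseteq> vertices K" "card B = Suc i" "\<not> reach K i F0 B" by blast
    have Bfin: "finite B" using B(2) card_ge_0_finite[of B] by simp
    have F0S: "F0 \<in> ?S" using f(1) F0 unfolding chains_def by force
    obtain F where F: "reach K i F0 F" and minF: "\<forall>F'. reach K i F0 F' \<longrightarrow> card (F - B) \<le> card (F' - B)"
      using ex_has_least_nat[of "reach K i F0" F0 "\<lambda>F. card (F - B)"] reach_refl[OF F0S] by blast
    have FS: "F \<in> ?S" using reach_in[OF F] .
    have Ffin: "finite F" and Fc: "card F = Suc i" using FS sc_face_finite[OF K] unfolding faces_def by auto
    have FB: "F \<noteq> B" using F B(3) by blast
    have "\<not> F \<subseteq> B" using card_subset_eq[OF Bfin, of F] Fc B(2) FB by auto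
    then obtain x where xF: "x \<in> F" and xB: "x \<notin> B" by blast
    have "\<not> B \<subseteq> F" using card_subset_eq[OF Ffin, of B] Fc B(2) FB by auto
    then obtain y where yB: "y \<in> B" and yF: "y \<notin> F" by blast
    define F' where "F' = insert y (F - {x})"
    have "F' - B = (F - B) - {x}" unfolding F'_def using yB by auto
    moreover have "card (F - B) > 0" using xF xB Ffin by (auto simp: card_gt_0_iff)
    ultimately have "card (F' - B) < card (F - B)"
      using xF xB Ffin by simp
    then have nF': "\<not> reach K i F0 F'" using minF by (meson not_le)
    have yV: "y \<in> vertices K" using B(1) yB by blast
    have sK: "insert y F \<notin> K"
    proof
      assume sK: "insert y F \<in> K"
      have "card (insert y F) = Suc (Suc i)" using Ffin Fc yF by simp
      then have sT: "insert y F \<in> ?T" using sK unfolding faces_def by simp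
      have "F' \<subseteq> insert y F" unfolding F'_def by blast
      then have "F' \<in> K" by (rule sc_sub[OF K sK])
      moreover have "card F' = Suc i"
      proof -
        have "card (F - {x}) = i" using Ffin Fc xF by simp
        moreover have "y \<notin> F - {x}" using yF by simp
        ultimately show ?thesis unfolding F'_def using Ffin by simp
      qed
      ultimately have F'S: "F' \<in> ?S" unfolding faces_def by simp
      have "F \<noteq> F'" unfolding F'_def using yF by auto
      moreover have "F \<union> F' = insert y F" unfolding F'_def using xF by auto
      ultimately have "up_neighbors K i F F'" unfolding up_neighbors_def using FS F'S sT by simp
      then have "reach K i F0 F'" using reach_step[OF F] by blast
      then show False using nF' by simp
    qed
    have ad: "addf K i F x y (reach K i F0)"
      unfolding addf_def
      using K pure F reach_in reach_step xF yF yV nF' sK unfolding F'_def by blast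
    interpret A: addf K i F x y "reach K i F0" by (rule ad)
    have inK: "A.K' \<in> cK n (Suc i) \<beta>" using A.inK nV bet by simp
    have qle: "q_spec A.K' i \<le> M" using max[OF inK] unfolding M_def .
    let ?S' = "faces A.K' i" and ?T' = "faces A.K' (Suc i)"
    have fS': "finite ?S'" and fT': "finite ?T'" using faces_finite[OF A.sc'] by auto
    have S'ne: "?S' \<noteq> {}" using Sne A.faces_i by blast
    note sp' = spectral[OF fS' S'ne fT', of inc]
    have q': "q_spec A.K' i = Max (EV ?S' ?T' inc)" by (rule q_eq[OF A.sc'])
    have fCc: "fC \<in> chn ?S" using comp(1) chains_chn by simp
    have fCc': "fC \<in> chn ?S'" using fCc A.faces_i unfolding chn_def by blast
    have zero_out: "\<And>G. G \<in> ?S' - ?S \<Longrightarrow> fC G = 0" using fCc unfolding chn_def by blast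
    have ipeq: "ip ?S' fC fC = ip ?S fC fC"
      unfolding ip_def by (rule sum.mono_neutral_right[OF fS' A.faces_i]) (simp add: zero_out)
    have sveq: "sv ?S' inc t fC = sv ?S inc t fC" for t
      unfolding sv_def by (rule sum.mono_neutral_right[OF fS' A.faces_i]) (simp add: zero_out)
    have PQ': "PQ ?S' ?T' inc fC = (sv ?S' inc (insert y F) fC)^2 + PQ ?S ?T inc fC"
      unfolding PQ_def A.faces_Si(1) sveq
      using A.faces_Si(2) faces_finite[OF K] by simp
    have FS': "F \<in> ?S'" using FS A.faces_i by blast
    have "fC F \<le> sv ?S' inc (insert y F) fC"
    proof -
      have "inc (insert y F) F * fC F \<le> (\<Sum>G\<in>?S'. inc (insert y F) G * fC G)"
        by (rule member_le_sum[OF FS']) (use comp(2) fS' in \<open>auto simp: inc_def\<close>)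
      then show ?thesis unfolding sv_def inc_def by (simp add: subset_insertI)
    qed
    moreover have "fC F > 0" using comp(4) F by blast
    ultimately have svpos: "(sv ?S' inc (insert y F) fC)^2 > 0" by simp
    have PQfC: "PQ ?S ?T inc fC = M * ip ?S fC fC" by (rule PQ_eig[OF K comp(1) comp(3)])
    have "fC F0 > 0" using comp(4) reach_refl[OF F0S] by blast
    then have fCne: "fC \<noteq> 0" by (metis less_irrefl zero_fun_apply)
    have ippos: "ip ?S fC fC > 0" by (rule ip_pos_chn[OF faces_finite[OF K] fCc fCne])
    have "PQ ?S' ?T' inc fC \<le> q_spec A.K' i * ip ?S' fC fC" using sp' fCc' q' by simp
    then have le2: "PQ ?S' ?T' inc fC \<le> q_spec A.K' i * ip ?S fC fC" using ipeq by simp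
    have "M * ip ?S fC fC < q_spec A.K' i * ip ?S fC fC"
      using le2 PQ' svpos PQfC by linarith
    then have "M < q_spec A.K' i" using ippos by (simp add: mult_less_cancel_right)
    then show False using qle by simp
  qed
  have part1: "\<forall>A. A \<subseteq> vertices K \<and> card A = r \<longrightarrow> A \<in> faces K (r - 1)"
  proof (intro allI impI)
    fix A assume A: "A \<subseteq> vertices K \<and> card A = r"
    then have "reach K i F0 A" using all r by simp
    then show "A \<in> faces K (r - 1)" using reach_in ri by simp
  qed
  have part2: "path_connected_faces K (r - 1)"
    unfolding ri pcf_reach
  proof (intro ballI)
    fix F G assume F: "F \<in> ?S" and G: "G \<in> ?S"
    have cF: "card F = Suc i" using F unfolding faces_def by simp
    have cG: "card G = Suc i" using G unfolding faces_def by simp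
    have "reach K i F0 F" using all faces_sub_V[OF F] cF by simp
    moreover have "reach K i F0 G" using all faces_sub_V[OF G] cG by simp
    ultimately show "reach K i F G" using reach_sym reach_trans by blast
  qed
  show ?thesis using part1 part2 by blast
qed

end
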